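(* Consider the sequences generated by Algorithm 2 (described in the context) and let $B=\{k\ge1:\lambda_k\|y_k-x_{k-1}\|<\eta\}$. Then for all $k\in B$, $$\nu_k\in N_C(y_k)\quad\text{and}\quad\|F(y_k)+\nu_k\|\le\frac{2\hat\theta/L+\eta}{\lambda_k^2}.$$
   Context: Setting: $\mathcal H$ real Hilbert space; $C\subseteq\mathcal H$ nonempty closed convex; $N_C(x)=\{\nu:\langle\nu,y-x\rangle\le0\ \forall y\in C\}$ if $x\in C$, $N_C(x)=\emptyset$ otherwise. $F:C\to\mathcal H$ is monotone, continuously differentiable, and $\|F'(x)-F'(y)\|\le L\|x-y\|$ for all $x,y\in C$, with $L>0$; the set of $x$ with $0\in F(x)+N_C(x)$ is nonempty. For $y\in C$, $F_y(x):=F(y)+F'(y)(x-y)$. Parameters: $0\le\hat\sigma<1/2$; $0<\theta<(1-\hat\sigma)(1-2\hat\sigma)$; $\hat\theta:=\theta\big(\frac{\hat\sigma}{1-\hat\sigma}+\frac{\theta}{(1-\hat\sigma)^2}\big)$; $\eta>2\hat\theta/L$; $\tau:=\dfrac{2(\theta-\hat\theta)}{2\theta+\frac{\eta L}{2}+\sqrt{(2\theta+\frac{\eta L}{2})^2-4\theta(\theta-\hat\theta)}}$. Algorithm 2: input $x_0\in C$, $y_0:=x_0$, $\nu_0:=0$, $\lambda_1>0$ with $\lambda_1^2\|F(y_0)\|\le2\theta/L$. For $k=1,2,\dots$: if $F(y_{k-1})+\nu_{k-1}=0$, stop and return $y_{k-1}$. If $\frac{\lambda_kL}{2}\|\lambda_k(F(y_{k-1})+\nu_{k-1})+y_{k-1}-x_{k-1}\|\le\hat\theta$,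 set $y_k=y_{k-1}$, $\nu_k=\nu_{k-1}$; otherwise find any $(y_k,\nu_k)$ with $\nu_k\in N_C(y_k)$ and $\|\lambda_k(F_{y_{k-1}}(y_k)+\nu_k)+y_k-x_{k-1}\|\le\hat\sigma\|y_k-y_{k-1}\|$. Then, if $\lambda_k\|y_k-x_{k-1}\|\ge\eta$, set $x_k=x_{k-1}-\tau\lambda_k(F(y_k)+\nu_k)$ and $\lambda_{k+1}=(1-\tau)\lambda_k$; else set $x_k=x_{k-1}$ and $\lambda_{k+1}=\lambda_k/(1-\tau)$. Standing assumption: the algorithm never stops at the first test, i.e. $F(y_{k-1})+\nu_{k-1}\neq0$ for all $k$. *)

theory Defs
  imports "HOL-Analysis.Analysis"
begin

definition normal_cone :: "'a::real_inner set \<Rightarrow> 'a \<Rightarrow> 'a set" where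
  "normal_cone C x = (if x \<in> C then {\<nu>. \<forall>y\<in>C. inner \<nu> (y - x) \<le> 0} else {})"

definition linearization :: "('a::real_normed_vector \<Rightarrow> 'a) \<Rightarrow> ('a \<Rightarrow> 'a \<Rightarrow>\<^sub>L 'a) \<Rightarrow> 'a \<Rightarrow> 'a \<Rightarrow> 'a" where
  "linearization F F' y x = F y + blinfun_apply (F' y) (x - y)"

definition theta_hat :: "real \<Rightarrow> real \<Rightarrow> real" where
  "theta_hat \<sigma> \<theta> = \<theta> * (\<sigma> / (1 - \<sigma>) + \<theta> / (1 - \<sigma>)^2)"

definition tau_par :: "real \<Rightarrow> real \<Rightarrow> real \<Rightarrow> real \<Rightarrow> real" where
  "tau_par \<sigma> \<theta> \<eta> L =
     2 * (\<theta> - theta_hat \<sigma> \<theta>) /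
     (2 * \<theta> + \<eta> * L / 2 +
      sqrt ((2 * \<theta> + \<eta> * L / 2)^2 - 4 * \<theta> * (\<theta> - theta_hat \<sigma> \<theta>)))"

end

theory Submission imports Defs begin

lemma seg_in:
  assumes "convex C" "u \<in> C" "v \<in> C" "0 \<le> t" "t \<le> 1"
  shows "u + t *\<^sub>R (v - u) \<in> C"
proof -
  have "(1 - t) *\<^sub>R u + t *\<^sub>R v \<in> C" using assms convex_alt by blast
  moreover have "(1 - t) *\<^sub>R u + t *\<^sub>R v = u + t *\<^sub>R (v - u)" by (simp add: algebra_simps)
  ultimately show ?thesis by simp
qed

lemma taylor_bound:
  fixes C :: "'a::real_inner set" and F :: "'a \<Rightarrow> 'a" and F' :: "'a \<Rightarrow> ('a \<Rightarrow>\<^sub>L 'a)"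
  assumes conv: "convex C"
    and F_deriv: "\<forall>u\<in>C. (F has_derivative blinfun_apply (F' u)) (at u within C)"
    and F'_lip: "\<forall>u\<in>C. \<forall>v\<in>C. norm (F' u - F' v) \<le> L * norm (u - v)"
    and u: "u \<in> C" and v: "v \<in> C" and L0: "0 \<le> L"
  shows "norm (F v - F u - blinfun_apply (F' u) (v - u)) \<le> L / 2 * (norm (v - u))^2"
proof -
  define d where "d = v - u"
  define g where "g = F v - F u - blinfun_apply (F' u) d"
  define p where "p = (\<lambda>t::real. u + t *\<^sub>R d)"
  define \<psi> where "\<psi> = (\<lambda>t::real. inner g (F (p t) - t *\<^sub>R blinfun_apply (F' u) d) - norm g * (L/2) * t^2 * (norm d)^2)"
  define \<psi>' where "\<psi>' = (\<lambda>t h::real. inner g (blinfun_apply (F' (p t)) (h *\<^sub>R d) - h *\<^sub>R blinfun_apply (F' u) d) - norm g * L * t * h * (norm d)^2)"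
  have pC: "p t \<in> C" if "0 \<le> t" "t \<le> 1" for t
    using seg_in[OF conv u v that] by (simp add: p_def d_def)
  have der: "(\<psi> has_derivative \<psi>' t) (at t within {0..1})" if "0 \<le> t" "t \<le> 1" for t
  proof -
    have dp: "(p has_derivative (\<lambda>h. h *\<^sub>R d)) (at t within {0..1})"
      unfolding p_def by (auto intro!: derivative_eq_intros)
    have dF: "((\<lambda>s. F (p s)) has_derivative (\<lambda>h. blinfun_apply (F' (p t)) (h *\<^sub>R d))) (at t within {0..1})"
      using has_derivative_in_compose2[of C F "\<lambda>x. blinfun_apply (F' x)" p "{0..1}" t "\<lambda>h. h *\<^sub>R d"]
        F_deriv pC dp that by (auto simp: image_subset_iff)
    show ?thesis unfolding \<psi>_def \<psi>'_def
      apply (rule derivative_eq_intros dF refl)+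
      apply (simp add: blinfun.scaleR_right inner_diff_right inner_scaleR_right algebra_simps)
      done
  qed
  obtain s where s: "s \<in> {0..1}" "\<psi> 1 - \<psi> 0 = \<psi>' s (1 - 0)"
    using mvt_very_simple[of 0 1 \<psi> \<psi>'] der by force
  have ps: "p s \<in> C" using s pC by auto
  have "inner g (blinfun_apply (F' (p s) - F' u) d) \<le> norm g * norm (blinfun_apply (F' (p s) - F' u) d)"
    by (rule norm_cauchy_schwarz)
  also have "\<dots> \<le> norm g * (norm (F' (p s) - F' u) * norm d)"
    by (intro mult_left_mono norm_blinfun) auto
  also have "\<dots> \<le> norm g * (L * s * norm d * norm d)"
  proof -
    have "norm (F' (p s) - F' u) \<le> L * norm (p s - u)" using F'_lip ps u by blast
    also have "norm (p s - u) = s * norm d" using s by (simp add: p_def)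
    finally show ?thesis by (intro mult_left_mono mult_right_mono) (auto simp: mult.assoc)
  qed
  finally have "\<psi>' s 1 \<le> 0" unfolding \<psi>'_def by (simp add: blinfun.diff_left power2_eq_square algebra_simps)
  hence "\<psi> 1 - \<psi> 0 \<le> 0" using s by simp
  moreover have "\<psi> 1 - \<psi> 0 = inner g g - norm g * (L/2) * (norm d)^2"
    unfolding \<psi>_def g_def p_def d_def by (simp add: algebra_simps inner_diff_right)
  ultimately have "norm g * norm g \<le> norm g * (L/2 * (norm d)^2)"
    by (simp add: power2_norm_eq_inner[symmetric] power2_eq_square algebra_simps)
  hence "norm g \<le> L/2 * (norm d)^2"
    by (cases "norm g = 0") (auto simp: mult_le_cancel_left L0)
  thus ?thesis by (simp add: g_def d_def)
qed

lemma nonneg_from_eps: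
  fixes a K :: real
  assumes K: "0 \<le> K" and h: "\<And>s. 0 < s \<Longrightarrow> s \<le> 1 \<Longrightarrow> a \<ge> - K * s"
  shows "a \<ge> 0"
proof (rule ccontr)
  assume "\<not> a \<ge> 0" hence a: "a < 0" by simp
  define s where "s = min 1 (- a / (2 * (K + 1)))"
  have s0: "0 < s" using a K by (simp add: s_def divide_neg_pos)
  have s1: "s \<le> 1" by (simp add: s_def)
  have "s \<le> - a / (2 * (K + 1))" by (simp add: s_def)
  hence "(K + 1) * s \<le> - a / 2" using K by (simp add: field_simps)
  moreover have "K * s \<le> (K+1) * s" using s0 by simp
  ultimately have "- K * s > a" using a by linarith
  with h[OF s0 s1] show False by linarith
qed

lemma deriv_mono:
  fixes C :: "'a::real_inner set" and F :: "'a \<Rightarrow> 'a" and F' :: "'a \<Rightarrow> ('a \<Rightarrow>\<^sub>L 'a)"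
  assumes conv: "convex C"
    and F_mono: "\<forall>u\<in>C. \<forall>v\<in>C. inner (F u - F v) (u - v) \<ge> 0"
    and F_deriv: "\<forall>u\<in>C. (F has_derivative blinfun_apply (F' u)) (at u within C)"
    and F'_lip: "\<forall>u\<in>C. \<forall>v\<in>C. norm (F' u - F' v) \<le> L * norm (u - v)"
    and u: "u \<in> C" and v: "v \<in> C" and L0: "0 \<le> L"
  shows "inner (blinfun_apply (F' u) (v - u)) (v - u) \<ge> 0"
proof (rule nonneg_from_eps)
  define d where "d = v - u"
  show "0 \<le> L / 2 * norm (v - u) ^ 3" using L0 by simp
  fix s :: real assume s0: "0 < s" and s1: "s \<le> 1"
  define w where "w = u + s *\<^sub>R d"
  have wC: "w \<in> C" using seg_in[OF conv u v] s0 s1 by (simp add: w_def d_def)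
  define r where "r = F w - F u - blinfun_apply (F' u) (w - u)"
  have wu: "w - u = s *\<^sub>R d" by (simp add: w_def)
  have r: "norm r \<le> L / 2 * (s * norm d)^2"
    using taylor_bound[OF conv F_deriv F'_lip u wC L0] using s0 by (simp add: r_def wu)
  have "0 \<le> inner (F w - F u) (w - u)" using F_mono wC u by blast
  also have "F w - F u = s *\<^sub>R blinfun_apply (F' u) d + r"
    by (simp add: r_def wu blinfun.scaleR_right)
  finally have "0 \<le> s * s * inner (blinfun_apply (F' u) d) d + s * inner r d"
    by (simp add: wu inner_add_left algebra_simps)
  hence "0 \<le> s * (s * inner (blinfun_apply (F' u) d) d + inner r d)"
    by (simp add: algebra_simps)
  hence A: "0 \<le> s * inner (blinfun_apply (F' u) d) d + inner r d"
    using s0 by (simp add: zero_le_mult_iff)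
  have "inner r d \<le> norm r * norm d"
    using norm_cauchy_schwarz[of r d] by simp
  also have "\<dots> \<le> L / 2 * (s * norm d)^2 * norm d" by (intro mult_right_mono r) auto
  finally have "s * inner (blinfun_apply (F' u) d) d \<ge> - (L / 2 * (s * norm d)^2 * norm d)"
    using A by linarith
  hence "s * inner (blinfun_apply (F' u) d) d \<ge> s * (- (L / 2 * norm d ^ 3 * s))"
    by (simp add: power2_eq_square power3_eq_cube algebra_simps)
  hence "inner (blinfun_apply (F' u) d) d \<ge> - (L / 2 * norm d ^ 3 * s)"
    using s0 mult_le_cancel_left_pos by blast
  thus "inner (blinfun_apply (F' u) (v - u)) (v - u) \<ge> - (L / 2 * norm (v - u) ^ 3) * s"
    by (simp add: d_def)
qed

lemma nc_mem: "w \<in> normal_cone C u \<Longrightarrow> u \<in> C"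
  by (auto simp: normal_cone_def split: if_splits)

lemma nc_ineq: "w \<in> normal_cone C u \<Longrightarrow> p \<in> C \<Longrightarrow> inner w (p - u) \<le> 0"
  by (auto simp: normal_cone_def split: if_splits)

lemma solve_est:
  fixes C :: "'a::real_inner set" and F :: "'a \<Rightarrow> 'a" and F' :: "'a \<Rightarrow> ('a \<Rightarrow>\<^sub>L 'a)"
  assumes conv: "convex C"
    and F_mono: "\<forall>u\<in>C. \<forall>v\<in>C. inner (F u - F v) (u - v) \<ge> 0"
    and F_deriv: "\<forall>u\<in>C. (F has_derivative blinfun_apply (F' u)) (at u within C)"
    and F'_lip: "\<forall>u\<in>C. \<forall>v\<in>C. norm (F' u - F' v) \<le> L * norm (u - v)"
    and L0: "0 < L"
    and nup: "\<nu>p \<in> normal_cone C yp" and nu: "\<nu> \<in> normal_cone C y"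
    and lam: "lam > 0" and s0: "0 \<le> \<sigma>" and s1: "\<sigma> < 1" and th: "0 \<le> \<theta>"
    and e: "norm (lam *\<^sub>R (linearization F F' yp y + \<nu>) + y - x) \<le> \<sigma> * norm (y - yp)"
    and z: "lam * L / 2 * norm (lam *\<^sub>R (F yp + \<nu>p) + yp - x) \<le> \<theta>"
  shows "lam * L / 2 * norm (lam *\<^sub>R (F y + \<nu>) + y - x) \<le> theta_hat \<sigma> \<theta>"
proof -
  have yp: "yp \<in> C" using nc_mem[OF nup] .
  have y: "y \<in> C" using nc_mem[OF nu] .
  define D where "D = y - yp"
  define E where "E = lam *\<^sub>R (linearization F F' yp y + \<nu>) + y - x"
  define Z where "Z = lam *\<^sub>R (F yp + \<nu>p) + yp - x"
  define W where "W = lam *\<^sub>R (F y + \<nu>) + y - x"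
  have EZ: "E - Z = lam *\<^sub>R blinfun_apply (F' yp) D + lam *\<^sub>R (\<nu> - \<nu>p) + D"
    by (simp add: E_def Z_def D_def linearization_def algebra_simps)
  have m: "inner (blinfun_apply (F' yp) D) D \<ge> 0"
    unfolding D_def by (rule deriv_mono[OF conv F_mono F_deriv F'_lip yp y]) (use L0 in auto)
  have n1: "inner \<nu> D \<ge> 0" using nc_ineq[OF nu yp] by (simp add: D_def inner_diff_right)
  have n2: "inner \<nu>p D \<le> 0" using nc_ineq[OF nup y] by (simp add: D_def)
  have "inner (E - Z) D = lam * inner (blinfun_apply (F' yp) D) D + lam * (inner \<nu> D - inner \<nu>p D) + inner D D"
    by (simp add: EZ inner_add_left inner_diff_left algebra_simps)
  also have "\<dots> \<ge> inner D D"
    using m n1 n2 lam by (simp add: add_nonneg_nonneg)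
  finally have "norm D * norm D \<le> inner (E - Z) D" by (simp add: power2_norm_eq_inner[symmetric] power2_eq_square)
  also have "\<dots> \<le> norm (E - Z) * norm D" by (rule norm_cauchy_schwarz)
  also have "\<dots> \<le> (norm E + norm Z) * norm D" by (intro mult_right_mono norm_triangle_ineq4) auto
  finally have "norm D \<le> norm E + norm Z"
    by (cases "norm D = 0") (auto simp: mult_le_cancel_right)
  moreover have "norm E \<le> \<sigma> * norm D" using e by (simp add: E_def D_def)
  ultimately have Dz: "(1 - \<sigma>) * norm D \<le> norm Z" by (simp add: algebra_simps)
  have tay: "norm (F y - linearization F F' yp y) \<le> L / 2 * (norm D)^2"
    using taylor_bound[OF conv F_deriv F'_lip yp y] L0
    by (simp add: linearization_def D_def algebra_simps)
  have WE: "W = E + lam *\<^sub>R (F y - linearization F F' yp y)"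
    by (simp add: W_def E_def algebra_simps)
  have "norm W \<le> norm E + lam * norm (F y - linearization F F' yp y)"
    unfolding WE using lam by (metis abs_of_pos norm_scaleR norm_triangle_ineq)
  also have "\<dots> \<le> \<sigma> * norm D + lam * (L / 2 * (norm D)^2)"
    using \<open>norm E \<le> \<sigma> * norm D\<close> tay lam by (intro add_mono mult_left_mono) auto
  finally have Wb: "norm W \<le> \<sigma> * norm D + lam * (L / 2 * (norm D)^2)" .
  define t where "t = lam * L / 2 * norm D"
  define T where "T = \<theta> / (1 - \<sigma>)"
  have t0: "0 \<le> t" using lam L0 by (simp add: t_def)
  have "(1 - \<sigma>) * t = (lam * L / 2) * ((1 - \<sigma>) * norm D)" by (simp add: t_def)
  also have "\<dots> \<le> lam * L / 2 * norm Z"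
    using Dz lam L0 by (intro mult_left_mono) auto
  also have "\<dots> \<le> \<theta>" using z by (simp add: Z_def)
  finally have tT: "t \<le> T" using s1 by (simp add: T_def field_simps)
  have "lam * L / 2 * norm W \<le> lam * L / 2 * (\<sigma> * norm D + lam * (L / 2 * (norm D)^2))"
    using Wb lam L0 by (intro mult_left_mono) auto
  also have "\<dots> = \<sigma> * t + t * t" by (simp add: t_def power2_eq_square algebra_simps)
  also have "\<dots> \<le> \<sigma> * T + T * T"
    using tT t0 s0 by (intro add_mono mult_left_mono mult_mono) auto
  also have "\<dots> = theta_hat \<sigma> \<theta>"
    using s1 by (simp add: theta_hat_def T_def power2_eq_square field_simps)
  finally show ?thesis by (simp add: W_def)
qed

lemma tau_facts:
  fixes \<sigma> \<theta> \<eta> L :: real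
  assumes h0: "0 \<le> theta_hat \<sigma> \<theta>" and h1: "theta_hat \<sigma> \<theta> < \<theta>" and L: "L > 0" and eta: "\<eta> > 0"
  shows "0 < tau_par \<sigma> \<theta> \<eta> L" "tau_par \<sigma> \<theta> \<eta> L < 1"
    "theta_hat \<sigma> \<theta> + tau_par \<sigma> \<theta> \<eta> L * \<eta> * L / 2 \<le> \<theta> * (1 - tau_par \<sigma> \<theta> \<eta> L)^2"
proof -
  define h where "h = theta_hat \<sigma> \<theta>"
  define b where "b = 2 * \<theta> + \<eta> * L / 2"
  define c where "c = \<theta> - h"
  define s where "s = sqrt (b^2 - 4 * \<theta> * c)"
  define t where "t = tau_par \<sigma> \<theta> \<eta> L"
  have th: "\<theta> > 0" using h0 h1 by (simp add: h_def)
  have c0: "c > 0" using h1 by (simp add: c_def h_def)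
  have eL: "\<eta> * L > 0" using L eta by simp
  have b2: "b > 2 * \<theta>" using eL by (simp add: b_def)
  have "4 * \<theta> * c \<le> 4 * \<theta> * \<theta>" using th h0 by (simp add: c_def h_def)
  also have "\<dots> = (2 * \<theta>)^2" by (simp add: power2_eq_square)
  also have "\<dots> < b^2" using b2 th by (intro power_strict_mono) auto
  finally have D: "b^2 - 4 * \<theta> * c > 0" by simp
  have s0: "s > 0" using D by (simp add: s_def)
  have ss: "s * s = b^2 - 4 * \<theta> * c" using D by (simp add: s_def)
  have tdef: "t = 2 * c / (b + s)" by (simp add: t_def tau_par_def b_def c_def s_def h_def)
  have bs: "b + s > 0" using b2 th s0 by simp
  have tb: "t * (b + s) = 2 * c" using bs by (simp add: tdef)
  show "0 < tau_par \<sigma> \<theta> \<eta> L" using c0 bs by (simp add: t_def[symmetric] tdef)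
  have "2 * c < b + s" using b2 s0 c0 th h0 by (simp add: c_def h_def)
  thus "tau_par \<sigma> \<theta> \<eta> L < 1" using bs by (simp add: t_def[symmetric] tdef)
  have "(\<theta> * t^2 - b * t + c) * (b + s)^2 = c * (4 * \<theta> * c - b^2 + s * s)"
  proof -
    have "(\<theta> * t^2 - b * t + c) * (b + s)^2 = \<theta> * (t * (b+s))^2 - b * (t * (b + s)) * (b + s) + c * (b+s)^2"
      by (simp add: power2_eq_square algebra_simps)
    also have "\<dots> = \<theta> * (2*c)^2 - b * (2 * c) * (b + s) + c * (b+s)^2" by (simp add: tb)
    also have "\<dots> = c * (4 * \<theta> * c - b^2 + s * s)" by (simp add: power2_eq_square algebra_simps)
    finally show ?thesis .
  qed
  also have "\<dots> = 0" using ss by simp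
  finally have "\<theta> * t^2 - b * t + c = 0" using bs by simp
  hence "h + t * \<eta> * L / 2 = \<theta> * (1 - t)^2"
    by (simp add: b_def c_def power2_eq_square algebra_simps)
  thus "theta_hat \<sigma> \<theta> + tau_par \<sigma> \<theta> \<eta> L * \<eta> * L / 2 \<le> \<theta> * (1 - tau_par \<sigma> \<theta> \<eta> L)^2"
    by (simp add: h_def t_def)
qed

lemma step_P:
  fixes v y x0 x1 :: "'a::real_inner"
  assumes L: "L > 0" and lam: "lam > 0" and t0: "0 < \<tau>" and t1: "\<tau> < 1"
    and key: "h + \<tau> * \<eta> * L / 2 \<le> \<theta> * (1 - \<tau>)^2" and h1: "h \<le> \<theta>"
    and W: "lam * L / 2 * norm (lam *\<^sub>R v + y - x0) \<le> h"
    and cases: "(x1 = x0 - (\<tau> * lam) *\<^sub>R v \<and> lam' = (1 - \<tau>) * lam) \<or>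
                (lam * norm (y - x0) < \<eta> \<and> x1 = x0 \<and> lam' = lam / (1 - \<tau>))"
  shows "lam' > 0 \<and> lam' * L / 2 * norm (lam' *\<^sub>R v + y - x1) \<le> \<theta>"
  using cases
proof
  assume A: "x1 = x0 - (\<tau> * lam) *\<^sub>R v \<and> lam' = (1 - \<tau>) * lam"
  have ll: "lam' + \<tau> * lam = lam" using A by (simp add: algebra_simps)
  have sv: "lam *\<^sub>R v = lam' *\<^sub>R v + (\<tau> * lam) *\<^sub>R v" by (metis ll scaleR_add_left)
  have eq: "lam' *\<^sub>R v + y - x1 = lam *\<^sub>R v + y - x0" using A sv by (simp add: algebra_simps)
  have "lam' * L / 2 * norm (lam' *\<^sub>R v + y - x1) = (1 - \<tau>) * (lam * L / 2 * norm (lam *\<^sub>R v + y - x0))"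
    unfolding eq by (simp add: A[THEN conjunct2])
  also have "\<dots> \<le> 1 * h" using W t0 t1 lam L by (intro mult_mono) auto
  finally show ?thesis using A t1 lam h1 by simp
next
  assume A: "lam * norm (y - x0) < \<eta> \<and> x1 = x0 \<and> lam' = lam / (1 - \<tau>)"
  define w where "w = lam *\<^sub>R v + y - x0"
  have lp: "lam' > 0" using A lam t1 by simp
  have "lam *\<^sub>R v = w - (y - x0)" by (simp add: w_def)
  hence "lam * norm v \<le> norm w + norm (y - x0)" using lam
    by (metis abs_of_pos norm_scaleR norm_triangle_ineq4)
  hence "lam * (lam * norm v) \<le> lam * (norm w + norm (y - x0))" using lam
    by (intro mult_left_mono) auto
  hence lv: "lam * (lam * norm v) \<le> lam * norm w + \<eta>" using A
    by (simp add: distrib_left)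
  have eq: "lam' *\<^sub>R v + y - x1 = w + (lam' - lam) *\<^sub>R v" using A by (simp add: w_def algebra_simps)
  have dl: "lam' - lam = lam * \<tau> / (1 - \<tau>)" using A t1 by (simp add: field_simps)
  have dl0: "lam' - lam \<ge> 0" using dl lam t0 t1 by simp
  have "norm (lam' *\<^sub>R v + y - x1) \<le> norm w + (lam' - lam) * norm v"
    unfolding eq using dl0 by (metis abs_of_nonneg norm_scaleR norm_triangle_ineq)
  hence "lam' * L / 2 * norm (lam' *\<^sub>R v + y - x1) \<le> lam' * L / 2 * (norm w + (lam' - lam) * norm v)"
    using lp L by (intro mult_left_mono) auto
  also have "\<dots> = L / (2 * (1 - \<tau>)^2) * ((1 - \<tau>) * lam * norm w + \<tau> * (lam * (lam * norm v)))"
    using t1 by (simp only: dl A[THEN conjunct2, THEN conjunct2]) (simp add: field_simps power2_eq_square)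
  also have "\<dots> \<le> L / (2 * (1 - \<tau>)^2) * ((1 - \<tau>) * lam * norm w + \<tau> * (lam * norm w + \<eta>))"
    using lv t0 t1 L by (intro mult_left_mono add_left_mono) auto
  also have "\<dots> = (lam * L / 2 * norm w + \<tau> * \<eta> * L / 2) / (1 - \<tau>)^2"
    using t1 by (simp add: field_simps power2_eq_square)
  also have "\<dots> \<le> (h + \<tau> * \<eta> * L / 2) / (1 - \<tau>)^2"
    using W t1 by (intro divide_right_mono add_right_mono) (auto simp: w_def)
  also have "\<dots> \<le> \<theta>" using key t1 by (simp add: divide_le_eq)
  finally show ?thesis using lp by simp
qed
theorem proposition4p7:
  fixes C :: "'a::{real_inner, complete_space} set"
    and F :: "'a \<Rightarrow> 'a" and F' :: "'a \<Rightarrow> ('a \<Rightarrow>\<^sub>L 'a)"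
    and L \<sigma> \<theta> \<eta> :: real
    and x y \<nu> :: "nat \<Rightarrow> 'a" and lam :: "nat \<Rightarrow> real"
  assumes C_ne: "C \<noteq> {}" and C_closed: "closed C" and C_convex: "convex C"
    and F_mono: "\<forall>u\<in>C. \<forall>v\<in>C. inner (F u - F v) (u - v) \<ge> 0"
    and F_deriv: "\<forall>u\<in>C. (F has_derivative blinfun_apply (F' u)) (at u within C)"
    and F'_cont: "continuous_on C F'"
    and L_pos: "L > 0"
    and F'_lip: "\<forall>u\<in>C. \<forall>v\<in>C. norm (F' u - F' v) \<le> L * norm (u - v)"
    and sol: "\<exists>u w. w \<in> normal_cone C u \<and> F u + w = 0"
    and \<sigma>_ge: "0 \<le> \<sigma>" and \<sigma>_lt: "\<sigma> < 1/2"
    and \<theta>_pos: "0 < \<theta>" and \<theta>_lt: "\<theta> < (1 - \<sigma>) * (1 - 2 * \<sigma>)"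
    and \<eta>_gt: "\<eta> > 2 * theta_hat \<sigma> \<theta> / L"
    and x0: "x 0 \<in> C" and y0: "y 0 = x 0" and \<nu>0: "\<nu> 0 = 0"
    and lam1_pos: "lam 1 > 0"
    and lam1_bd: "(lam 1)^2 * norm (F (y 0)) \<le> 2 * \<theta> / L"
    and no_stop: "\<forall>k\<ge>1. F (y (k - 1)) + \<nu> (k - 1) \<noteq> 0"
    and step_skip: "\<forall>k\<ge>1.
          lam k * L / 2 * norm (lam k *\<^sub>R (F (y (k - 1)) + \<nu> (k - 1)) + y (k - 1) - x (k - 1))
            \<le> theta_hat \<sigma> \<theta>
          \<longrightarrow> y k = y (k - 1) \<and> \<nu> k = \<nu> (k - 1)"
    and step_solve: "\<forall>k\<ge>1.
          \<not> (lam k * L / 2 * norm (lam k *\<^sub>R (F (y (k - 1)) + \<nu> (k - 1)) + y (k - 1) - x (k - 1))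
            \<le> theta_hat \<sigma> \<theta>)
          \<longrightarrow> \<nu> k \<in> normal_cone C (y k) \<and>
              norm (lam k *\<^sub>R (linearization F F' (y (k - 1)) (y k) + \<nu> k) + y k - x (k - 1))
                \<le> \<sigma> * norm (y k - y (k - 1))"
    and step_ext: "\<forall>k\<ge>1. lam k * norm (y k - x (k - 1)) \<ge> \<eta> \<longrightarrow>
          x k = x (k - 1) - (tau_par \<sigma> \<theta> \<eta> L * lam k) *\<^sub>R (F (y k) + \<nu> k) \<and>
          lam (k + 1) = (1 - tau_par \<sigma> \<theta> \<eta> L) * lam k"
    and step_null: "\<forall>k\<ge>1. lam k * norm (y k - x (k - 1)) < \<eta> \<longrightarrow>
          x k = x (k - 1) \<and> lam (k + 1) = lam k / (1 - tau_par \<sigma> \<theta> \<eta> L)"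
  shows "\<forall>k\<in>{k. k \<ge> 1 \<and> lam k * norm (y k - x (k - 1)) < \<eta>}.
           \<nu> k \<in> normal_cone C (y k) \<and>
           norm (F (y k) + \<nu> k) \<le> (2 * theta_hat \<sigma> \<theta> / L + \<eta>) / (lam k)^2"
proof -
  define h where "h = theta_hat \<sigma> \<theta>"
  define \<tau> where "\<tau> = tau_par \<sigma> \<theta> \<eta> L"
  have s1: "\<sigma> < 1" using \<sigma>_lt by simp
  have h0: "0 \<le> h" unfolding h_def theta_hat_def using \<sigma>_ge s1 \<theta>_pos by simp
  have h1: "h < \<theta>"
  proof -
    have "\<sigma> * (1 - \<sigma>) + \<theta> < (1 - \<sigma>)^2" using \<theta>_lt by (simp add: power2_eq_square algebra_simps)
    hence "(\<sigma> * (1 - \<sigma>) + \<theta>) / (1 - \<sigma>)^2 < 1" using s1 by simp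
    hence "\<sigma> / (1 - \<sigma>) + \<theta> / (1 - \<sigma>)^2 < 1" using s1 by (simp add: power2_eq_square add_divide_distrib)
    thus ?thesis unfolding h_def theta_hat_def using \<theta>_pos by simp
  qed
  have eta0: "\<eta> > 0" using \<eta>_gt h0 L_pos unfolding h_def by (smt (verit) divide_nonneg_pos)
  have tf: "0 < \<tau>" "\<tau> < 1" "h + \<tau> * \<eta> * L / 2 \<le> \<theta> * (1 - \<tau>)^2"
    using tau_facts[of \<sigma> \<theta> L \<eta>] h0 h1 L_pos eta0 by (simp_all add: h_def \<tau>_def)
  define P where "P = (\<lambda>k. \<nu> k \<in> normal_cone C (y k) \<and> lam (Suc k) > 0 \<and>
       lam (Suc k) * L / 2 * norm (lam (Suc k) *\<^sub>R (F (y k) + \<nu> k) + y k - x k) \<le> \<theta>)"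
  define Q where "Q = (\<lambda>k. \<nu> k \<in> normal_cone C (y k) \<and> lam k > 0 \<and>
       lam k * L / 2 * norm (lam k *\<^sub>R (F (y k) + \<nu> k) + y k - x (k - 1)) \<le> h)"
  have PQ: "Q (Suc k)" if Pk: "P k" for k
  proof (cases "lam (Suc k) * L / 2 * norm (lam (Suc k) *\<^sub>R (F (y k) + \<nu> k) + y k - x k) \<le> h")
    case True
    with step_skip[rule_format, of "Suc k"] have "y (Suc k) = y k" "\<nu> (Suc k) = \<nu> k"
      by (simp_all add: h_def)
    with True Pk show ?thesis by (simp add: P_def Q_def)
  next
    case False
    with step_solve[rule_format, of "Suc k"] have
      nu: "\<nu> (Suc k) \<in> normal_cone C (y (Suc k))" and
      e: "norm (lam (Suc k) *\<^sub>R (linearization F F' (y k) (y (Suc k)) + \<nu> (Suc k)) + y (Suc k) - x k)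
                \<le> \<sigma> * norm (y (Suc k) - y k)"
      by (simp_all add: h_def)
    have "lam (Suc k) * L / 2 * norm (lam (Suc k) *\<^sub>R (F (y (Suc k)) + \<nu> (Suc k)) + y (Suc k) - x k) \<le> theta_hat \<sigma> \<theta>"
      by (rule solve_est[OF C_convex F_mono F_deriv F'_lip L_pos _ nu _ \<sigma>_ge s1 _ e])
         (use Pk \<theta>_pos in \<open>auto simp: P_def\<close>)
    with nu Pk show ?thesis by (simp add: P_def Q_def h_def)
  qed
  have QP: "P (Suc k)" if Qk: "Q (Suc k)" for k
  proof -
    have cs: "(x (Suc k) = x k - (\<tau> * lam (Suc k)) *\<^sub>R (F (y (Suc k)) + \<nu> (Suc k)) \<and> lam (Suc (Suc k)) = (1 - \<tau>) * lam (Suc k)) \<or>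
       (lam (Suc k) * norm (y (Suc k) - x k) < \<eta> \<and> x (Suc k) = x k \<and> lam (Suc (Suc k)) = lam (Suc k) / (1 - \<tau>))"
    proof (cases "lam (Suc k) * norm (y (Suc k) - x k) \<ge> \<eta>")
      case True
      then show ?thesis using step_ext[rule_format, of "Suc k"] by (simp add: \<tau>_def)
    next
      case False
      then show ?thesis using step_null[rule_format, of "Suc k"] by (simp add: \<tau>_def)
    qed
    have "lam (Suc (Suc k)) > 0 \<and> lam (Suc (Suc k)) * L / 2 * norm (lam (Suc (Suc k)) *\<^sub>R (F (y (Suc k)) + \<nu> (Suc k)) + y (Suc k) - x (Suc k)) \<le> \<theta>"
      by (rule step_P[OF L_pos _ tf(1) tf(2) tf(3) _ _ cs]) (use Qk h1 in \<open>auto simp: Q_def\<close>)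
    with Qk show ?thesis by (simp add: P_def Q_def)
  qed
  have P0: "P 0"
  proof -
    have nc: "\<nu> 0 \<in> normal_cone C (y 0)" using x0 y0 \<nu>0 by (simp add: normal_cone_def)
    have "lam 1 * L / 2 * norm (lam 1 *\<^sub>R (F (y 0) + \<nu> 0) + y 0 - x 0) = L / 2 * ((lam 1)^2 * norm (F (y 0)))"
      using y0 \<nu>0 lam1_pos by (simp add: power2_eq_square)
    also have "L / 2 * ((lam 1)^2 * norm (F (y 0))) \<le> L / 2 * (2 * \<theta> / L)"
      using lam1_bd L_pos by (intro mult_left_mono) auto
    also have "\<dots> = \<theta>" using L_pos by simp
    finally show ?thesis using nc lam1_pos L_pos by (simp add: P_def)
  qed
  have allP: "P k" for k
  proof (induction k)
    case 0 show ?case by (rule P0)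
  next
    case (Suc k) show ?case by (rule QP[OF PQ[OF Suc.IH]])
  qed
  show ?thesis
  proof
    fix k assume "k \<in> {k. k \<ge> 1 \<and> lam k * norm (y k - x (k - 1)) < \<eta>}"
    hence k1: "k \<ge> 1" and kB: "lam k * norm (y k - x (k - 1)) < \<eta>" by auto
    obtain m where km: "k = Suc m" using k1 by (cases k) auto
    have Qk: "Q k" using PQ[OF allP[of m]] km by simp
    hence nu: "\<nu> k \<in> normal_cone C (y k)" and lp: "lam k > 0"
      and W: "lam k * L / 2 * norm (lam k *\<^sub>R (F (y k) + \<nu> k) + y k - x (k - 1)) \<le> h"
      by (auto simp: Q_def)
    define v where "v = F (y k) + \<nu> k"
    define w where "w = lam k *\<^sub>R v + y k - x (k - 1)"
    have "lam k *\<^sub>R v = w - (y k - x (k - 1))" by (simp add: w_def)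
    hence "lam k * norm v \<le> norm w + norm (y k - x (k - 1))" using lp
      by (metis abs_of_pos norm_scaleR norm_triangle_ineq4)
    hence "lam k * (lam k * norm v) \<le> lam k * (norm w + norm (y k - x (k - 1)))" using lp
      by (intro mult_left_mono) auto
    also have "\<dots> = lam k * norm w + lam k * norm (y k - x (k - 1))" by (simp add: distrib_left)
    also have "\<dots> \<le> 2 * h / L + \<eta>"
    proof -
      have "lam k * norm w \<le> 2 * h / L" using W L_pos by (simp add: w_def v_def field_simps)
      thus ?thesis using kB by simp
    qed
    finally have "(lam k)^2 * norm v \<le> 2 * h / L + \<eta>" by (simp add: power2_eq_square mult.assoc)
    hence "norm v \<le> (2 * h / L + \<eta>) / (lam k)^2" using lp by (simp add: field_simps)
    thus "\<nu> k \<in> normal_cone C (y k) \<and> norm (F (y k) + \<nu> k) \<le> (2 * theta_hat \<sigma> \<theta> / L + \<eta>) / (lam k)^2"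
      using nu by (simp add: v_def h_def)
  qed
qed
end
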